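(* Let $w$ be a word of odd rank and $c$ a legal point of $\mathcal C_w$ whose intersection sequence $T(c)$ is simple. Then the polygonal $\mathcal G(c)$ is regular.
   Context: For real parameters $\mathrm a,\mathrm b$, the map $F:\mathbb R^2\to\mathbb R^2$ is $F(x,y)=(\mathrm a x-y,x)$ if $x>0$ or ($x=0$ and $y\le0$), and $F(x,y)=(\mathrm b x-y,x)$ otherwise. Letter $a$ is assigned to points in the open right half-plane or on the negative $y$-axis, and $b$ otherwise. Boundary rays are the $y$ semi-axes $L^\pm$. For a word $w=w_0\cdots w_{n-1}$: $Q_{-1}=-1$, $Q_0=0$, $Q_{t+1}=w_tQ_t-Q_{t-1}$ (letters specialised to $\mathrm a,\mathrm b$). The rank is $1+|w|_{ab}+|w|_{ba}$. For odd rank, with $\mathbf k=\lfloor n/2\rfloor$, $C_w=Q_{\mathbf k+1}-Q_{\mathbf k}$ ($n$ odd) or $Q_{\mathbf k+1}-Q_{\mathbf k-1}$ ($n$ even), and $\mathcal C_w=\{C_w=0\}$. A legal point of $\mathcal C_w$ is a parameter pair at which $w$ is equivalent to the symbolic word of the actual $F$-orbit segment between the two boundary rays. Equivalence allows changing letters at positions where the orbit lies on a boundary ray; equivalence "at $c$" refers to this orbit at parameters $c$. Intersection sequence: $T(c)=(t_1,t_2,\dots)$, the increasing list of $t$ with $0<t<n$ and $Q_t(c)=0$. $T(c)$ is simple if it is empty or if the word $w_0\cdots w_{t_1-1}$ is equivalent at $c$ to a word of rank $1$. Polygonal: let $\gamma_t=(Q_t^2,0)$ if $w_t=a$ and $\gamma_t=(0,Q_t^2)$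 if $w_t=b$, and $\Gamma_t=\sum_{i=0}^t\gamma_i$ for $t=0,\dots,n-1$. $\mathcal G(c)$ is the polygonal line through $\Gamma_0(c),\dots,\Gamma_{n-1}(c)$. An intersection point of $\mathcal G$ is a $\Gamma_t$ with $\Gamma_t=\Gamma_{t-1}$. The median of $\mathcal G$ is the segment $[\Gamma_0,\Gamma_{n-1}]$. $\mathcal G$ is regular if no intersection point lies on its median. *)

theory Defs
  imports "HOL-Analysis.Analysis"
begin

datatype letter = A | B

fun lval :: "real \<times> real \<Rightarrow> letter \<Rightarrow> real" where
  "lval (a, b) A = a"
| "lval (a, b) B = b"

definition letter_of :: "real \<times> real \<Rightarrow> letter" where
  "letter_of p = (if fst p > 0 \<or> (fst p = 0 \<and> snd p \<le> 0) then A else B)"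

definition Fmap :: "real \<times> real \<Rightarrow> real \<times> real \<Rightarrow> real \<times> real" where
  "Fmap c p = (lval c (letter_of p) * fst p - snd p, fst p)"

definition on_boundary :: "real \<times> real \<Rightarrow> bool" where
  "on_boundary p = (fst p = 0 \<and> snd p \<noteq> 0)"

text \<open>Orbit starting at (Q_0, Q_{-1}) = (0,-1) on L-.\<close>
definition orbit :: "real \<times> real \<Rightarrow> nat \<Rightarrow> real \<times> real" where
  "orbit c t = (Fmap c ^^ t) (0, -1)"

definition sym_word :: "real \<times> real \<Rightarrow> nat \<Rightarrow> letter list" where
  "sym_word c n = map (\<lambda>t. letter_of (orbit c t)) [0..<n]"

definition equiv_at :: "real \<times> real \<Rightarrow> letter list \<Rightarrow> letter list \<Rightarrow> bool" where
  "equiv_at c u v = (length u = length v \<and>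
     (\<forall>t < length u. u ! t \<noteq> v ! t \<longrightarrow> on_boundary (orbit c t)))"

text \<open>Qp c w t = (Q_{t-1}, Q_t).\<close>
fun Qp :: "real \<times> real \<Rightarrow> letter list \<Rightarrow> nat \<Rightarrow> real \<times> real" where
  "Qp c w 0 = (-1, 0)"
| "Qp c w (Suc t) = (snd (Qp c w t), lval c (w ! t) * snd (Qp c w t) - fst (Qp c w t))"

definition Q :: "real \<times> real \<Rightarrow> letter list \<Rightarrow> nat \<Rightarrow> real" where
  "Q c w t = snd (Qp c w t)"

definition Qprev :: "real \<times> real \<Rightarrow> letter list \<Rightarrow> nat \<Rightarrow> real" where
  "Qprev c w t = fst (Qp c w t)"

definition count_factor :: "letter \<Rightarrow> letter \<Rightarrow> letter list \<Rightarrow> nat" where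
  "count_factor x y w = card {i. Suc i < length w \<and> w ! i = x \<and> w ! Suc i = y}"

definition rank :: "letter list \<Rightarrow> nat" where
  "rank w = 1 + count_factor A B w + count_factor B A w"

definition Cw :: "letter list \<Rightarrow> real \<times> real \<Rightarrow> real" where
  "Cw w c = (let n = length w; k = n div 2 in
     if odd n then Q c w (k + 1) - Q c w k else Q c w (k + 1) - Qprev c w k)"

definition legal_point :: "letter list \<Rightarrow> real \<times> real \<Rightarrow> bool" where
  "legal_point w c = (Cw w c = 0 \<and> equiv_at c w (sym_word c (length w)))"

definition isec_seq :: "real \<times> real \<Rightarrow> letter list \<Rightarrow> nat list" where
  "isec_seq c w = filter (\<lambda>t. Q c w t = 0) [1..<length w]"

definition simple_isec :: "real \<times> real \<Rightarrow> letter list \<Rightarrow> bool" where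
  "simple_isec c w = (isec_seq c w = [] \<or>
     (\<exists>u. rank u = 1 \<and> equiv_at c (take (hd (isec_seq c w)) w) u))"

definition gamma :: "real \<times> real \<Rightarrow> letter list \<Rightarrow> nat \<Rightarrow> real \<times> real" where
  "gamma c w t = (if w ! t = A then ((Q c w t)\<^sup>2, 0) else (0, (Q c w t)\<^sup>2))"

definition Gamma :: "real \<times> real \<Rightarrow> letter list \<Rightarrow> nat \<Rightarrow> real \<times> real" where
  "Gamma c w t = (\<Sum>i = 0..t. gamma c w i)"

text \<open>Regular polygonal: no intersection point lies on the median.\<close>
definition regular_polygonal :: "real \<times> real \<Rightarrow> letter list \<Rightarrow> bool" where
  "regular_polygonal c w = (\<forall>t. 1 \<le> t \<and> t < length w \<and> Gamma c w t = Gamma c w (t - 1) \<longrightarrow>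
      Gamma c w t \<notin> closed_segment (Gamma c w 0) (Gamma c w (length w - 1)))"

end

theory Submission
  imports Defs
begin


lemma homog:
  fixes x :: "nat \<Rightarrow> real"
  assumes rec: "\<And>m. 1 \<le> m \<Longrightarrow> m < n \<Longrightarrow> x (Suc m) = g (x m) - x (m - 1)"
    and gh: "\<And>y. g (l*y) = l * g y"
    and yz: "y \<le> z" and e0: "x z = l * x y" and e1: "x (Suc z) = l * x (Suc y)"
    and zn: "Suc z \<le> n" and jn: "z + j \<le> n"
  shows "x (z+j) = l * x (y+j)"
proof -
  have aux: "z + j + 1 \<le> n \<longrightarrow> x (z+j) = l * x (y+j) \<and> x (z+j+1) = l * x (y+j+1)" for j
  proof (induction j)
    case 0
    then show ?case using e0 e1 by simp
  next
    case (Suc j)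
    show ?case
    proof
      assume h: "z + Suc j + 1 \<le> n"
      then have IH: "x (z+j) = l * x (y+j) \<and> x (z+j+1) = l * x (y+j+1)" using Suc by simp
      have r1: "x (Suc (z+j+1)) = g (x (z+j+1)) - x (z+j)"
        using rec[of "z+j+1"] h by simp
      have r2: "x (Suc (y+j+1)) = g (x (y+j+1)) - x (y+j)"
        using rec[of "y+j+1"] h yz by simp
      have "x (Suc (z+j+1)) = g (l * x (y+j+1)) - l * x (y+j)" using r1 IH by simp
      also have "\<dots> = l * (g (x (y+j+1)) - x (y+j))" using gh by (simp add: right_diff_distrib)
      also have "\<dots> = l * x (Suc (y+j+1))" using r2 by simp
      finally show "x (z + Suc j) = l * x (y + Suc j) \<and> x (z + Suc j + 1) = l * x (y + Suc j + 1)"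
        using IH by simp
    qed
  qed
  show ?thesis
  proof (cases j)
    case 0 then show ?thesis using e0 by simp
  next
    case (Suc j') then show ?thesis using aux[of j'] jn by simp
  qed
qed

lemma inv_step: fixes a X Y Z :: real shows "Z = a*X - Y \<Longrightarrow> Z^2 - a*Z*X + X^2 = X^2 - a*X*Y + Y^2"
  by algebra

lemma core:
  fixes x :: "nat \<Rightarrow> real" and g hA hB :: "real \<Rightarrow> real"
  assumes rec: "\<And>m. 1 \<le> m \<Longrightarrow> m < n \<Longrightarrow> x (Suc m) = g (x m) - x (m - 1)"
    and gh: "\<And>l y. l > 0 \<Longrightarrow> g (l*y) = l * g y"
    and g0: "g 0 = 0" and ga: "\<And>y. y > 0 \<Longrightarrow> g y = a * y"
    and x0: "x 0 = 0" and x1: "x 1 = 1"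
    and sym: "\<And>t. t \<le> n \<Longrightarrow> x (n - t) = x t"
    and tz: "1 \<le> tz" "tz < n" "x tz = 0" and pos: "\<And>s. 1 \<le> s \<Longrightarrow> s < tz \<Longrightarrow> x s > 0"
    and t: "1 \<le> t" "t < n" "x t = 0"
    and hA0: "hA 0 = 0" and hB0: "hB 0 = 0" and hAnn: "\<And>y. hA y \<ge> 0" and hBnn: "\<And>y. hB y \<ge> 0"
    and hBpos: "\<And>y. y > 0 \<Longrightarrow> hB y = 0" and hA1: "hA 1 = 1" and hBm1: "hB (-1) = 1"
    and u: "0 \<le> u" "u \<le> 1"
    and SAeq: "(\<Sum>i<t. hA (x i)) = u * (\<Sum>i<n. hA (x i))"
    and SBeq: "(\<Sum>i<t. hB (x i)) = u * (\<Sum>i<n. hB (x i))"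
  shows False
proof -
  define SA where "SA N = (\<Sum>i<N. hA (x i))" for N
  define SB where "SB N = (\<Sum>i<N. hB (x i))" for N
  have t1ne1: "tz \<noteq> 1" using tz x1 by auto
  have t1ge2: "tz \<ge> 2" using tz t1ne1 by simp
  have inv: "m \<le> tz \<longrightarrow> (x m)^2 - a * x m * x (m-1) + (x (m-1))^2 = 1" if "1 \<le> m" for m
    using that
  proof (induction m rule: nat_induct_at_least)
    case base then show ?case using x0 x1 by simp
  next
    case (Suc m)
    show ?case
    proof
      assume h: "Suc m \<le> tz"
      have "x m > 0" using pos[of m] Suc h by simp
      then have eq: "x (Suc m) = a * x m - x (m-1)" using rec[of m] Suc h tz ga by simp
      have "(x (Suc m))^2 - a * x (Suc m) * x m + (x m)^2 = (x m)^2 - a * x m * x (m-1) + (x (m-1))^2"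
        by (rule inv_step[OF eq])
      then show "(x (Suc m))^2 - a * x (Suc m) * x (Suc m - 1) + (x (Suc m - 1))^2 = 1"
        using Suc h by simp
    qed
  qed
  have "(x (tz-1))^2 = 1" using inv[of tz] tz by simp
  moreover have "x (tz-1) > 0" using pos[of "tz-1"] t1ge2 by simp
  ultimately have xt1m: "x (tz-1) = 1"
  proof -
    have "x (tz-1) = 1 \<or> x (tz-1) = -1" using power2_eq_1_iff \<open>(x (tz-1))^2 = 1\<close> by blast
    then show ?thesis using \<open>x (tz-1) > 0\<close> by linarith
  qed
  have xt1p: "x (Suc tz) = -1" using rec[of tz] tz g0 xt1m by simp
  define d where "d = n - tz"
  have d0: "x d = 0" using sym[of tz] tz d_def by simp
  have "Suc d = n - (tz - 1)" using d_def tz by simp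
  then have d1: "x (Suc d) = 1" using sym[of "tz-1"] tz xt1m by simp
  have dpos: "0 < d" "d < n" using d_def tz by auto
  define P where "P = (LEAST z. 0 < z \<and> z < n \<and> x z = 0 \<and> x (Suc z) > 0)"
  have Pex: "0 < d \<and> d < n \<and> x d = 0 \<and> x (Suc d) > 0" using dpos d0 d1 by simp
  have Pp: "0 < P \<and> P < n \<and> x P = 0 \<and> x (Suc P) > 0"
    unfolding P_def by (rule LeastI[of _ d], rule Pex)
  have Pmin: "P \<le> z" if "0 < z" "z < n" "x z = 0" "x (Suc z) > 0" for z
    unfolding P_def by (rule Least_le) (use that in simp)
  have Pged: "P \<le> d" using Pmin Pex by blast
  have Pt1: "tz < P"
  proof -
    have "\<not> P < tz" using pos[of P] Pp by auto
    moreover have "P \<noteq> tz" using Pp xt1p by auto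
    ultimately show ?thesis by simp
  qed
  have Pt1s: "Suc tz < P" using Pt1 Pp xt1p by (metis less_Suc_eq_0_disj Suc_lessI neg_equal_0_iff_equal zero_neq_one)
  have nozero: "x z \<noteq> 0" if "tz < z" "z < P" for z
  proof
    assume xz: "x z = 0"
    define z2 where "z2 = (LEAST z. tz < z \<and> z < P \<and> x z = 0)"
    have z2p: "tz < z2 \<and> z2 < P \<and> x z2 = 0" unfolding z2_def
      by (rule LeastI[of _ z]) (use that xz in simp)
    have z2min: "z2 \<le> z'" if "tz < z'" "z' < P" "x z' = 0" for z'
      unfolding z2_def by (rule Least_le) (use that in simp)
    have "x (z2 - 1) \<noteq> 0"
    proof (cases "z2 - 1 = tz")
      case True
      then have "z2 = Suc tz" using z2p by linarith
      then show ?thesis using z2p xt1p by simp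
    next
      case False
      then have "tz < z2 - 1" using z2p by linarith
      moreover have "z2 - 1 < z2" using z2p by simp
      ultimately show ?thesis using z2min[of "z2-1"] z2p by fastforce
    qed
    moreover have xs2: "x (Suc z2) = - x (z2 - 1)" using rec[of z2] z2p Pp Pt1 g0 tz by simp
    ultimately have "x (Suc z2) \<noteq> 0" by simp
    moreover have "\<not> x (Suc z2) > 0" using Pmin[of z2] z2p Pp Pt1 tz by fastforce
    ultimately have neg: "x (Suc z2) < 0" by simp
    define nu where "nu = - x (Suc z2)"
    have nupos: "nu > 0" using neg nu_def by simp
    have H: "x (z2 + j) = nu * x (tz + j)" if "z2 + j \<le> n" for j
      by (rule homog[where g=g and n=n]) (use rec gh nupos z2p tz xt1p nu_def Pp that in auto)
    define j where "j = P - z2"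
    have j1: "x P = nu * x (tz + j)" using H[of j] j_def z2p Pp by simp
    have j2: "x (Suc P) = nu * x (Suc (tz + j))" using H[of "Suc j"] j_def z2p Pp by simp
    have "x (tz + j) = 0" using j1 Pp nupos by simp
    moreover have "x (Suc (tz + j)) > 0" using j2 Pp nupos by (simp add: zero_less_mult_iff)
    moreover have "tz + j < P" using j_def z2p by linarith
    ultimately have "P \<le> tz + j" using Pmin[of "tz+j"] Pp tz by simp
    then show False using \<open>tz + j < P\<close> by simp
  qed
  define l where "l = x (Suc P)"
  have lpos: "l > 0" using Pp l_def by simp
  have per0: "x (P + j) = l * x (0 + j)" if "P + j \<le> n" for j
  proof (rule homog[where g=g and n=n and y=0 and z=P and l=l and j=j and x=x])
    show "\<And>m. 1 \<le> m \<Longrightarrow> m < n \<Longrightarrow> x (Suc m) = g (x m) - x (m - 1)" by (rule rec)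
    show "\<And>y. g (l*y) = l * g y" using gh lpos by simp
    show "x P = l * x 0" using Pp x0 by simp
    show "x (Suc P) = l * x (Suc 0)" using l_def x1 by simp
    show "Suc P \<le> n" using Pp by simp
  qed (use that in simp_all)
  have per: "x (P + j) = l * x j" if "P + j \<le> n" for j using per0[OF that] by simp
  have perm: "x (m*P + r) = l^m * x r" if "m*P + r \<le> n" for m r
    using that
  proof (induction m)
    case 0 then show ?case by simp
  next
    case (Suc m)
    have "x (P + (m*P + r)) = l * x (m*P+r)" using per[of "m*P+r"] Suc by simp
    then show ?case using Suc by (simp add: add.assoc)
  qed
  have zeros: "r = 0 \<or> r = tz" if "r < P" "x r = 0" for r
  proof (rule ccontr)
    assume "\<not> (r = 0 \<or> r = tz)"
    then have "r \<noteq> 0" "r \<noteq> tz" by auto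
    show False
    proof (cases "r < tz")
      case True then show ?thesis using pos[of r] \<open>r \<noteq> 0\<close> that by simp
    next
      case False then show ?thesis using nozero[of r] \<open>r \<noteq> tz\<close> that by simp
    qed
  qed
  define m where "m = d div P"
  define r where "r = d mod P"
  have dmr: "d = m*P + r" using m_def r_def by simp
  have rP: "r < P" using r_def Pp by simp
  have "x d = l^m * x r" using perm[of m r] dmr dpos by simp
  then have xr0: "x r = 0" using d0 lpos by simp
  have r0: "r = 0"
  proof (rule ccontr)
    assume "r \<noteq> 0"
    then have "r = tz" using zeros rP xr0 by auto
    then have "x (Suc d) = l^m * x (Suc tz)" using perm[of m "Suc r"] dmr dpos by simp
    then have "x (Suc d) < 0" using xt1p lpos by simp
    then show False using d1 by simp
  qed
  have m1: "m \<ge> 1" using dmr r0 dpos by (cases m) auto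
  have "x (Suc d) = l^m * x 1" using perm[of m 1] dmr r0 dpos by simp
  then have lm1: "l^m = 1" using d1 x1 by simp
  have l1: "l = 1"
  proof (rule ccontr)
    assume "l \<noteq> 1"
    then consider "l < 1" | "l > 1" by linarith
    then show False
    proof cases
      case 1 then have "l^m < 1" using lpos m1 by (simp add: power_less_one_iff)
      then show ?thesis using lm1 by simp
    next
      case 2 then have "l^m > 1" using m1 by (simp add: one_less_power)
      then show ?thesis using lm1 by simp
    qed
  qed
  have period: "x N = x (N mod P)" if "N \<le> n" for N
    using perm[of "N div P" "N mod P"] l1 that by simp
  have sumA: "SA N = real (N div P) * SA P + SA (N mod P)" if "N \<le> n" for N
    using that
  proof (induction N)
    case 0 then show ?case by (simp add: SA_def)
  next
    case (Suc N)
    have IH: "SA N = real (N div P) * SA P + SA (N mod P)" using Suc by simp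
    have xN: "x N = x (N mod P)" using period Suc by simp
    have "SA (Suc N) = SA N + hA (x (N mod P))" using xN by (simp add: SA_def)
    also have "\<dots> = real (N div P) * SA P + SA (Suc (N mod P))" using IH by (simp add: SA_def)
    finally have E: "SA (Suc N) = real (N div P) * SA P + SA (Suc (N mod P))" .
    show ?case
    proof (cases "Suc (N mod P) = P")
      case True
      then have "Suc N mod P = 0" "Suc N div P = Suc (N div P)" by (simp_all add: mod_Suc div_Suc)
      then show ?thesis using E True by (simp add: SA_def algebra_simps)
    next
      case False
      then have "Suc N mod P = Suc (N mod P)" "Suc N div P = N div P" by (simp_all add: mod_Suc div_Suc)
      then show ?thesis using E by simp
    qed
  qed
  have sumB: "SB N = real (N div P) * SB P + SB (N mod P)" if "N \<le> n" for N
    using that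
  proof (induction N)
    case 0 then show ?case by (simp add: SB_def)
  next
    case (Suc N)
    have IH: "SB N = real (N div P) * SB P + SB (N mod P)" using Suc by simp
    have xN: "x N = x (N mod P)" using period Suc by simp
    have "SB (Suc N) = SB N + hB (x (N mod P))" using xN by (simp add: SB_def)
    also have "\<dots> = real (N div P) * SB P + SB (Suc (N mod P))" using IH by (simp add: SB_def)
    finally have E: "SB (Suc N) = real (N div P) * SB P + SB (Suc (N mod P))" .
    show ?case
    proof (cases "Suc (N mod P) = P")
      case True
      then have "Suc N mod P = 0" "Suc N div P = Suc (N div P)" by (simp_all add: mod_Suc div_Suc)
      then show ?thesis using E True by (simp add: SB_def algebra_simps)
    next
      case False
      then have "Suc N mod P = Suc (N mod P)" "Suc N div P = N div P" by (simp_all add: mod_Suc div_Suc)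
      then show ?thesis using E by simp
    qed
  qed
  have nmP: "n = m*P + tz" using dmr r0 d_def tz by simp
  have ndiv: "n div P = m" "n mod P = tz" using nmP Pt1 by auto
  have SBt1: "SB tz = 0"
  proof -
    have "hB (x i) = 0" if "i < tz" for i
    proof (cases "i = 0")
      case True then show ?thesis using x0 hB0 by simp
    next
      case False then show ?thesis using pos[of i] hBpos that by simp
    qed
    then show ?thesis unfolding SB_def by simp
  qed
  have SAt1: "SA tz > 0"
  proof -
    have "hA (x 1) \<le> SA tz" unfolding SA_def
      by (rule member_le_sum) (use t1ge2 hAnn in auto)
    then show ?thesis using x1 hA1 by simp
  qed
  have SBP: "SB P > 0"
  proof -
    have "hB (x (Suc tz)) \<le> SB P" unfolding SB_def
      by (rule member_le_sum) (use Pt1s hBnn in auto)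
    then show ?thesis using xt1p hBm1 by simp
  qed
  have SB0: "SB 0 = 0" "SA 0 = 0" by (simp_all add: SA_def SB_def)
  define j where "j = t div P"
  define r2 where "r2 = t mod P"
  have tj: "t = j*P + r2" using j_def r2_def by simp
  have "x r2 = 0" using period[of t] t r2_def by simp
  then have r2c: "r2 = 0 \<or> r2 = tz" using zeros r2_def Pp by simp
  have eA: "real j * SA P + SA r2 = u * (real m * SA P + SA tz)"
    using SAeq sumA[of t] sumA[of n] t ndiv j_def r2_def by (simp add: SA_def)
  have eB: "real j * SB P + SB r2 = u * (real m * SB P + SB tz)"
    using SBeq sumB[of t] sumB[of n] t ndiv j_def r2_def by (simp add: SB_def)
  have SBr2: "SB r2 = 0" using r2c SBt1 SB0 by auto
  have "real j * SB P = (u * real m) * SB P" using eB SBr2 SBt1 by (simp add: algebra_simps)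
  then have ju: "real j = u * real m" using SBP by simp
  then have "SA r2 = u * SA tz" using eA by (simp add: algebra_simps)
  show False
    using r2c
  proof
    assume "r2 = 0"
    then have "u = 0" using \<open>SA r2 = u * SA tz\<close> SAt1 SB0 by simp
    then have "j = 0" using ju by simp
    then show False using tj \<open>r2 = 0\<close> t by simp
  next
    assume "r2 = tz"
    then have "u = 1" using \<open>SA r2 = u * SA tz\<close> SAt1 by simp
    then have "j = m" using ju by simp
    then show False using tj \<open>r2 = tz\<close> t nmP by simp
  qed
qed



lemma Q0[simp]: "Q c w 0 = 0" and Qprev0[simp]: "Qprev c w 0 = -1"
  and QS: "Q c w (Suc t) = lval c (w!t) * Q c w t - Qprev c w t"
  and QprevS[simp]: "Qprev c w (Suc t) = Q c w t"
  by (simp_all add: Q_def Qprev_def)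

lemma Q1[simp]: "Q c w (Suc 0) = 1" by (simp add: QS)

lemma lvalA: "lval c A = fst c" and lvalB: "lval c B = snd c" by (cases c, simp)+

lemma orbit_eq:
  assumes eq: "equiv_at c w (sym_word c (length w))"
  shows "t \<le> length w \<Longrightarrow> orbit c t = (Q c w t, Qprev c w t)"
proof (induction t)
  case 0 then show ?case by (simp add: orbit_def)
next
  case (Suc t)
  have IH: "orbit c t = (Q c w t, Qprev c w t)" using Suc by simp
  have tl: "t < length w" using Suc by simp
  have "lval c (letter_of (orbit c t)) * Q c w t = lval c (w!t) * Q c w t"
  proof (cases "Q c w t = 0")
    case True then show ?thesis by simp
  next
    case False
    have "sym_word c (length w) ! t = letter_of (orbit c t)" using tl by (simp add: sym_word_def)
    moreover have "\<not> on_boundary (orbit c t)" using IH False by (simp add: on_boundary_def)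
    ultimately have "w ! t = letter_of (orbit c t)" using eq tl unfolding equiv_at_def by metis
    then show ?thesis by simp
  qed
  then show ?case using IH by (simp add: orbit_def Fmap_def QS)
qed

lemma letter_eq:
  assumes eq: "equiv_at c w (sym_word c (length w))" and tl: "t < length w" and nz: "Q c w t \<noteq> 0"
  shows "w ! t = (if Q c w t > 0 then A else B)"
proof -
  have ob: "orbit c t = (Q c w t, Qprev c w t)" using orbit_eq[OF eq] tl by simp
  have "sym_word c (length w) ! t = letter_of (orbit c t)" using tl by (simp add: sym_word_def)
  moreover have "\<not> on_boundary (orbit c t)" using ob nz by (simp add: on_boundary_def)
  ultimately have "w ! t = letter_of (orbit c t)" using eq tl unfolding equiv_at_def by metis
  then show ?thesis using ob nz by (simp add: letter_of_def)
qed

definition gg :: "real \<times> real \<Rightarrow> real \<Rightarrow> real" where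
  "gg c y = (if y > 0 then fst c * y else snd c * y)"
definition hA :: "real \<Rightarrow> real" where "hA y = (if y > 0 then y^2 else 0)"
definition hB :: "real \<Rightarrow> real" where "hB y = (if y > 0 then 0 else y^2)"

lemma lval_gg:
  assumes eq: "equiv_at c w (sym_word c (length w))" and tl: "t < length w"
  shows "lval c (w!t) * Q c w t = gg c (Q c w t)"
proof (cases "Q c w t = 0")
  case True then show ?thesis by (simp add: gg_def)
next
  case False
  then show ?thesis using letter_eq[OF eq tl False] by (simp add: gg_def lvalA lvalB)
qed

lemma gamma_eq:
  assumes eq: "equiv_at c w (sym_word c (length w))" and tl: "t < length w"
  shows "gamma c w t = (hA (Q c w t), hB (Q c w t))"
proof (cases "Q c w t = 0")
  case True then show ?thesis by (simp add: gamma_def hA_def hB_def)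
next
  case False
  then show ?thesis using letter_eq[OF eq tl False] by (simp add: gamma_def hA_def hB_def)
qed

lemma Gamma_eq:
  assumes eq: "equiv_at c w (sym_word c (length w))"
  shows "t < length w \<Longrightarrow> Gamma c w t = ((\<Sum>i<Suc t. hA (Q c w i)), (\<Sum>i<Suc t. hB (Q c w i)))"
proof (induction t)
  case 0 then show ?case using gamma_eq[OF eq, of 0] by (simp add: Gamma_def)
next
  case (Suc t)
  have "Gamma c w (Suc t) = Gamma c w t + gamma c w (Suc t)" by (simp add: Gamma_def)
  then show ?case using Suc gamma_eq[OF eq, of "Suc t"] by simp
qed

lemma reflect:
  fixes x :: "nat \<Rightarrow> real"
  assumes rec: "\<And>m. 1 \<le> m \<Longrightarrow> m < n \<Longrightarrow> x (Suc m) = g (x m) - x (m - 1)"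
    and pq: "p + q = n" "p \<le> q" "q \<le> Suc p" "1 \<le> q" and e1: "x p = x q" and e2: "x (Suc p) = x (q - 1)"
    and tn: "t \<le> n"
  shows "x (n - t) = x t"
proof -
  have aux: "j \<le> p \<longrightarrow> x (p - j) = x (q + j) \<and> x (p - j + 1) = x (q + j - 1)" for j
  proof (induction j)
    case 0 then show ?case using e1 e2 by simp
  next
    case (Suc j)
    show ?case
    proof
      assume h: "Suc j \<le> p"
      have IH: "x (p - j) = x (q + j) \<and> x (p - j + 1) = x (q + j - 1)" using Suc h by simp
      have r1: "x (Suc (q+j)) = g (x (q+j)) - x (q+j-1)" using rec[of "q+j"] pq h by simp
      have r2: "x (Suc (p-j)) = g (x (p-j)) - x (p-j-1)" using rec[of "p-j"] pq h by simp
      have "x (p - Suc j) = x (p-j-1)" by simp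
      also have "\<dots> = g (x (p-j)) - x (Suc (p-j))" using r2 by simp
      also have "\<dots> = g (x (q+j)) - x (q+j-1)" using IH by simp
      also have "\<dots> = x (q + Suc j)" using r1 by simp
      finally have A1: "x (p - Suc j) = x (q + Suc j)" .
      have "p - Suc j + 1 = p - j" "q + Suc j - 1 = q + j" using h by auto
      then show "x (p - Suc j) = x (q + Suc j) \<and> x (p - Suc j + 1) = x (q + Suc j - 1)"
        using A1 IH by simp
    qed
  qed
  show ?thesis
  proof (cases "t \<le> p")
    case True
    then have "x (p - (p - t)) = x (q + (p - t))" using aux[of "p-t"] by simp
    moreover have "p - (p - t) = t" "q + (p - t) = n - t" using True pq by auto
    ultimately show ?thesis by simp
  next
    case False
    define t' where "t' = n - t"
    have t'p: "t' \<le> p" using False pq t'_def by simp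
    then have "x (p - (p - t')) = x (q + (p - t'))" using aux[of "p-t'"] by simp
    moreover have "p - (p - t') = t'" "q + (p - t') = t" using t'p pq t'_def tn by auto
    ultimately show ?thesis using t'_def by simp
  qed
qed

lemma sorted_hd_le: "sorted xs \<Longrightarrow> y \<in> set xs \<Longrightarrow> hd xs \<le> y"
  by (cases xs) auto

lemma rank1_noAB:
  assumes "rank u = 1" "Suc i < length u" "u ! i = A" "u ! Suc i = B"
  shows False
proof -
  have c0: "count_factor A B u = 0" using assms(1) by (simp add: rank_def)
  have fin: "finite {i. Suc i < length u \<and> u ! i = A \<and> u ! Suc i = B}"
    by (rule finite_subset[of _ "{..<length u}"]) auto
  have "{i. Suc i < length u \<and> u ! i = A \<and> u ! Suc i = B} = {}"
    using c0 fin unfolding count_factor_def by simp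
  then show False using assms by blast
qed

theorem mainTheorem12:
  fixes w :: "letter list" and c :: "real \<times> real"
  assumes "odd (rank w)"
    and "legal_point w c"
    and "simple_isec c w"
  shows "regular_polygonal c w"
  unfolding regular_polygonal_def
proof (intro allI impI notI)
  fix t
  assume ht: "1 \<le> t \<and> t < length w \<and> Gamma c w t = Gamma c w (t - 1)"
    and seg: "Gamma c w t \<in> closed_segment (Gamma c w 0) (Gamma c w (length w - 1))"
  define n where "n = length w"
  define x where "x = Q c w"
  have eq: "equiv_at c w (sym_word c (length w))" and Cw0: "Cw w c = 0"
    using assms(2) by (auto simp: legal_point_def)
  have tn: "1 \<le> t" "t < n" using ht n_def by auto
  have G: "Gamma c w s = ((\<Sum>i<Suc s. hA (x i)), (\<Sum>i<Suc s. hB (x i)))" if "s < n" for s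
    using Gamma_eq[OF eq] that n_def x_def by simp
  have "Gamma c w t = Gamma c w (t - 1)" using ht by simp
  then have "hA (x t) = 0 \<and> hB (x t) = 0" using G[of t] G[of "t-1"] tn by simp
  then have xt: "x t = 0" unfolding hA_def hB_def by (auto split: if_splits)
  have rec: "x (Suc m) = gg c (x m) - x (m - 1)" if "1 \<le> m" "m < n" for m
  proof -
    have "Qprev c w m = Q c w (m - 1)" using that by (cases m) auto
    then show ?thesis using lval_gg[OF eq, of m] that QS[of c w m] x_def n_def by simp
  qed
  have t2: "t \<noteq> 1" using xt x_def by auto
  have n3: "n \<ge> 3" using tn t2 by simp
  have sym: "x (n - s) = x s" if "s \<le> n" for s
  proof (cases "odd n")
    case True
    define k where "k = n div 2"
    have "Cw w c = Q c w (k+1) - Q c w k" using True k_def n_def by (simp add: Cw_def Let_def)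
    then have "x k = x (k+1)" using Cw0 x_def by simp
    show ?thesis
    proof (rule reflect[where g="gg c" and p=k and q="Suc k" and n=n])
      have nk: "n = 2*k+1" using True k_def by presburger
      show "k + Suc k = n" using nk by simp
    qed (use rec that \<open>x k = x (k+1)\<close> in auto)
  next
    case False
    define k where "k = n div 2"
    have k2: "k \<ge> 1" using n3 k_def by simp
    have "Cw w c = Q c w (k+1) - Qprev c w k" using False k_def n_def by (simp add: Cw_def Let_def)
    moreover have "Qprev c w k = Q c w (k - 1)" using k2 by (cases k) auto
    ultimately have "x (Suc k) = x (k-1)" using Cw0 x_def by simp
    show ?thesis
    proof (rule reflect[where g="gg c" and p=k and q=k and n=n])
      have nk: "n = 2*k" using False k_def by presburger
      show "k + k = n" using nk by simp
    qed (use rec that k2 \<open>x (Suc k) = x (k-1)\<close> in auto)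
  qed
  define xs where "xs = isec_seq c w"
  have xsdef: "xs = filter (\<lambda>t. x t = 0) [1..<n]" using xs_def x_def n_def by (simp add: isec_seq_def)
  have tin: "t \<in> set xs" using xsdef tn xt by simp
  then have xsne: "xs \<noteq> []" by auto
  define t1 where "t1 = hd xs"
  have t1in: "t1 \<in> set xs" using xsne t1_def by simp
  have t1p: "1 \<le> t1" "t1 < n" "x t1 = 0" using t1in xsdef by auto
  have sxs: "sorted xs" unfolding xsdef by (rule sorted_filter[of id, simplified]) simp
  have t1min: "x s \<noteq> 0" if "1 \<le> s" "s < t1" for s
  proof
    assume "x s = 0"
    then have "s \<in> set xs" using xsdef that t1p by simp
    then have "t1 \<le> s" using sorted_hd_le[OF sxs] t1_def by simp
    then show False using that by simp
  qed
  obtain u where u: "rank u = 1" "equiv_at c (take t1 w) u"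
    using assms(3) xsne xs_def t1_def unfolding simple_isec_def by auto
  have ueq: "u ! s = w ! s" if "1 \<le> s" "s < t1" for s
  proof -
    have lu: "length u = t1" using u(2) t1p n_def by (simp add: equiv_at_def)
    have "orbit c s = (x s, Qprev c w s)" using orbit_eq[OF eq, of s] that t1p n_def x_def by simp
    then have "\<not> on_boundary (orbit c s)" using t1min[OF that] by (simp add: on_boundary_def)
    then have "take t1 w ! s = u ! s" using u(2) that t1p n_def unfolding equiv_at_def by auto
    then show ?thesis using that by simp
  qed
  have pos: "x s > 0" if "1 \<le> s" "s < t1" for s
    using that
  proof (induction s rule: nat_induct_at_least)
    case base then show ?case using x_def by simp
  next
    case (Suc s)
    have xs0: "x s > 0" using Suc by simp
    have nz: "x (Suc s) \<noteq> 0" using t1min[of "Suc s"] Suc by simp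
    show ?case
    proof (rule ccontr)
      assume "\<not> 0 < x (Suc s)"
      then have neg: "x (Suc s) < 0" using nz by simp
      have "w ! s = A" using letter_eq[OF eq, of s] xs0 Suc t1p n_def x_def by simp
      moreover have "w ! Suc s = B" using letter_eq[OF eq, of "Suc s"] neg Suc t1p n_def x_def by simp
      moreover have "length u = t1" using u(2) t1p n_def by (simp add: equiv_at_def)
      ultimately show False using rank1_noAB[OF u(1), of s] ueq[of s] ueq[of "Suc s"] Suc by simp
    qed
  qed
  obtain v where v: "0 \<le> v" "v \<le> 1"
    "Gamma c w t = (1 - v) *\<^sub>R Gamma c w 0 + v *\<^sub>R Gamma c w (n - 1)"
    using seg by (auto simp: in_segment n_def)
  have G0: "Gamma c w 0 = (0, 0)" using G[of 0] n3 x_def by (simp add: hA_def hB_def)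
  have Gn0: "Gamma c w (n-1) = ((\<Sum>i<Suc (n-1). hA (x i)), (\<Sum>i<Suc (n-1). hB (x i)))"
    by (rule G) (use n3 in simp)
  have sn: "Suc (n-1) = n" using n3 by simp
  have Gn: "Gamma c w (n - 1) = ((\<Sum>i<n. hA (x i)), (\<Sum>i<n. hB (x i)))"
    using Gn0 by (simp only: sn)
  have Gt: "Gamma c w t = ((\<Sum>i<t. hA (x i)), (\<Sum>i<t. hB (x i)))"
    using G[of t] tn xt by (simp add: hA_def hB_def)
  have SAeq: "(\<Sum>i<t. hA (x i)) = v * (\<Sum>i<n. hA (x i))"
    and SBeq: "(\<Sum>i<t. hB (x i)) = v * (\<Sum>i<n. hB (x i))"
    using v(3) G0 Gn Gt by simp_all
  show False
  proof (rule core[where x=x and g="gg c" and a="fst c" and hA=hA and hB=hB and n=n and tz=t1 and t=t and u=v])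
    show "\<And>m. 1 \<le> m \<Longrightarrow> m < n \<Longrightarrow> x (Suc m) = gg c (x m) - x (m - 1)" by (rule rec)
    show "\<And>l y. l > 0 \<Longrightarrow> gg c (l*y) = l * gg c y"
      by (auto simp: gg_def zero_less_mult_iff mult_le_0_iff)
  qed (use x_def pos sym t1p tn xt v SAeq SBeq in \<open>auto simp: gg_def hA_def hB_def\<close>)
qed

end
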